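(* Let $m,n,p,q\in\mathbb{R}$ with $m<0$, and let $P(t)=t^5+mt^3+nt^2+pt+q$. Set $u=\frac{2\sqrt{-m}}{\sqrt5}$, $\alpha=\frac{16n}{u^3}$, $\beta=\frac{16p}{u^4}-5$, $\gamma=\frac{16q}{u^5}$, and $f(\theta)=\alpha\cos^2\theta+\beta\cos\theta+\cos 5\theta+\gamma$. Let $N_{\mathrm{int}}$ be the number of zeros of $f$ in $[0,\pi]$ and $N_{\mathrm{ext}}$ the number of real roots of $P$ outside $[-u,u]$. Then $P(t)=0$ has exactly one real root (and two conjugate pairs of nonreal complex roots) if and only if $N_{\mathrm{int}}+N_{\mathrm{ext}}=1$. In this case one of the following holds: (a) $f$ has exactly one zero in $[0,\pi]$ and $N_{\mathrm{ext}}=0$, and the unique real root lies in $[-u,u]$; (b) $f$ has no zeros in $[0,\pi]$ and $f(\pi)>0$, and the unique real root lies in $(-\infty,-u)$; (c) $f$ has no zeros in $[0,\pi]$ and $f(0)<0$, and the unique real root lies in $(u,\infty)$.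
   Context: Note $f(0)=\alpha+\beta+1+\gamma$ and $f(\pi)=\alpha-\beta-1+\gamma$. *)

theory Defs
  imports Complex_Main
begin

end

theory Submission imports Defs "HOL-Computational_Algebra.Polynomial" begin

lemma quint_pos:
  fixes m n p q :: real
  shows "(1+(\<bar>m\<bar>+\<bar>n\<bar>+\<bar>p\<bar>+\<bar>q\<bar>))^5 + m*(1+(\<bar>m\<bar>+\<bar>n\<bar>+\<bar>p\<bar>+\<bar>q\<bar>))^3
     + n*(1+(\<bar>m\<bar>+\<bar>n\<bar>+\<bar>p\<bar>+\<bar>q\<bar>))^2 + p*(1+(\<bar>m\<bar>+\<bar>n\<bar>+\<bar>p\<bar>+\<bar>q\<bar>)) + q > 0"
proof -
  define K where "K = \<bar>m\<bar>+\<bar>n\<bar>+\<bar>p\<bar>+\<bar>q\<bar>"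
  define T where "T = 1 + K"
  have K0: "K \<ge> 0" unfolding K_def by simp
  have T1: "T \<ge> 1" unfolding T_def using K0 by simp
  have a1: "T^2 \<le> T^3" using T1 by (simp add: power_increasing)
  have a2: "T \<le> T^3" using T1 power_increasing[of 1 3 T] by simp
  have a3: "1 \<le> T^3" using T1 by simp
  have b1: "m*T^3 \<ge> -\<bar>m\<bar>*T^3" using T1 mult_right_mono[of "-\<bar>m\<bar>" m "T^3"] by simp
  have b2: "n*T^2 \<ge> -\<bar>n\<bar>*T^3"
  proof -
    have "n*T^2 \<ge> -\<bar>n\<bar>*T^2" using mult_right_mono[of "-\<bar>n\<bar>" n "T^2"] by simp
    moreover have "-\<bar>n\<bar>*T^2 \<ge> -\<bar>n\<bar>*T^3" using a1 by (simp add: mult_left_mono)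
    ultimately show ?thesis by linarith
  qed
  have b3: "p*T \<ge> -\<bar>p\<bar>*T^3"
  proof -
    have "p*T \<ge> -\<bar>p\<bar>*T" using T1 mult_right_mono[of "-\<bar>p\<bar>" p T] by simp
    moreover have "-\<bar>p\<bar>*T \<ge> -\<bar>p\<bar>*T^3" using a2 by (simp add: mult_left_mono)
    ultimately show ?thesis by linarith
  qed
  have b4: "q \<ge> -\<bar>q\<bar>*T^3"
  proof -
    have "\<bar>q\<bar> \<le> \<bar>q\<bar>*T^3" using a3 by (simp add: mult_left_mono[of 1 "T^3" "\<bar>q\<bar>", simplified])
    then show ?thesis by linarith
  qed
  have c: "T^5 - K*T^3 > 0"
  proof -
    have "T^5 - K*T^3 = T^3*(T^2 - K)" by (simp add: algebra_simps eval_nat_numeral)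
    moreover have "T^2 - K > 0"
    proof -
      have "T^2 - K = 1 + K + K*K" unfolding T_def by (simp add: algebra_simps power2_eq_square)
      moreover have "K*K \<ge> 0" by simp
      ultimately show ?thesis using K0 by linarith
    qed
    moreover have "T^3 > 0" using T1 by simp
    ultimately show ?thesis by simp
  qed
  have "T^5 + m*T^3 + n*T^2 + p*T + q > 0"
    using b1 b2 b3 b4 c unfolding K_def by (simp add: algebra_simps)
  then show ?thesis unfolding T_def K_def .
qed

lemma cos5: fixes x::real shows "cos (5*x) = 16*cos x^5 - 20*cos x^3 + 5*(cos x)"
proof -
  have s: "sin x ^2 = 1 - cos x^2" by (simp add: sin_squared_eq)
  have c4: "cos (4*x) = 2*(2*cos x^2 - 1)^2 - 1"
    using cos_double_cos[of "2*x"] cos_double_cos[of x] by simp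
  have s4: "sin (4*x) = 4*sin x * cos x *(2*cos x^2 - 1)"
    using sin_double[of "2*x"] sin_double[of x] cos_double_cos[of x] by simp
  have "cos (5*x) = cos (4*x + x)" by simp
  also have "\<dots> = cos (4*x) * cos x - sin (4*x) * sin x" by (rule cos_add)
  also have "\<dots> = (2*(2*cos x^2 - 1)^2 - 1) * cos x - 4*sin x^2 * cos x *(2*cos x^2 - 1)"
    by (simp add: c4 s4 power2_eq_square)
  also have "\<dots> = 16*cos x^5 - 20*cos x^3 + 5*(cos x::real)"
    unfolding s by (simp add: algebra_simps power2_eq_square power3_eq_cube eval_nat_numeral)
  finally show ?thesis .
qed

theorem theorem3:
  fixes m n p q u \<alpha> \<beta> \<gamma> :: real and P f :: "real \<Rightarrow> real" and N_int N_ext :: nat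
  assumes hm: "m < 0"
    and hP: "P = (\<lambda>t. t^5 + m * t^3 + n * t^2 + p * t + q)"
    and hu: "u = 2 * sqrt (- m) / sqrt 5"
    and h\<alpha>: "\<alpha> = 16 * n / u^3"
    and h\<beta>: "\<beta> = 16 * p / u^4 - 5"
    and h\<gamma>: "\<gamma> = 16 * q / u^5"
    and hf: "f = (\<lambda>\<theta>. \<alpha> * (cos \<theta>)^2 + \<beta> * cos \<theta> + cos (5 * \<theta>) + \<gamma>)"
    and hNint: "N_int = card {\<theta> \<in> {0..pi}. f \<theta> = 0}"
    and hNext: "N_ext = card {t. P t = 0 \<and> t \<notin> {-u..u}}"
  shows "(card {t. P t = 0} = 1 \<longleftrightarrow> N_int + N_ext = 1)
    \<and> (card {t. P t = 0} = 1 \<longrightarrow>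
         (\<forall>r. P r = 0 \<longrightarrow>
            (N_int = 1 \<and> N_ext = 0 \<and> r \<in> {-u..u})
          \<or> (N_int = 0 \<and> f pi > 0 \<and> r \<in> {..<-u})
          \<or> (N_int = 0 \<and> f 0 < 0 \<and> r \<in> {u<..})))"
proof -
  have u0: "u > 0" unfolding hu using hm by simp
  have u2: "u^2 = -4*m/5" unfolding hu using hm
    by (simp add: power_divide power_mult_distrib)
  have mu: "m = -5/4*u^2" using u2 by simp
  have fP: "f \<theta> = 16/u^5 * P (u * cos \<theta>)" for \<theta>
  proof -
    have "f \<theta> = 16*n/u^3 * cos \<theta>^2 + (16*p/u^4 - 5)*cos \<theta> + (16*cos \<theta>^5 - 20*cos \<theta>^3 + 5*cos \<theta>) + 16*q/u^5"
      unfolding hf h\<alpha> h\<beta> h\<gamma> cos5 by simp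
    also have "\<dots> = 16/u^5 * P (u * cos \<theta>)"
      unfolding hP mu using u0 by (simp add: field_simps eval_nat_numeral)
    finally show ?thesis .
  qed
  define R where "R = {t. P t = 0}"
  have polyP: "P = poly [:q,p,n,m,0,1:]"
    unfolding hP by (rule ext) (simp add: algebra_simps eval_nat_numeral)
  have finR: "finite R"
  proof -
    have "[:q,p,n,m,0,1:] \<noteq> (0::real poly)" by simp
    from poly_roots_finite[OF this] show ?thesis unfolding R_def polyP .
  qed
  define A where "A = {\<theta> \<in> {0..pi}. f \<theta> = 0}"
  have imA: "(\<lambda>\<theta>. u * cos \<theta>) ` A = R \<inter> {-u..u}"
  proof
    show "(\<lambda>\<theta>. u * cos \<theta>) ` A \<subseteq> R \<inter> {-u..u}"
      using u0 mult_left_mono[of "-1" "cos _" u] mult_left_mono[of "cos _" 1 u]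
      by (auto simp: A_def R_def fP)
    show "R \<inter> {-u..u} \<subseteq> (\<lambda>\<theta>. u * cos \<theta>) ` A"
    proof
      fix t assume t: "t \<in> R \<inter> {-u..u}"
      define \<theta> where "\<theta> = arccos (t/u)"
      have b: "-1 \<le> t/u" "t/u \<le> 1" using t u0 by (auto simp: field_simps)
      have ct: "u * cos \<theta> = t" unfolding \<theta>_def using b u0 by simp
      have "\<theta> \<in> A" unfolding A_def using arccos_lbound[OF b] arccos_ubound[OF b] ct t u0
        by (auto simp: fP R_def \<theta>_def)
      with ct show "t \<in> (\<lambda>\<theta>. u * cos \<theta>) ` A" by force
    qed
  qed
  have injA: "inj_on (\<lambda>\<theta>. u * cos \<theta>) A"
    unfolding inj_on_def A_def using u0 cos_inj_pi by auto
  have Nint: "N_int = card (R \<inter> {-u..u})"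
    unfolding hNint A_def[symmetric] imA[symmetric] using card_image[OF injA] by simp
  have Next: "N_ext = card (R - {-u..u})"
    unfolding hNext R_def by (simp add: set_diff_eq)
  have sum: "card R = N_int + N_ext"
    unfolding Nint Next using finR
    by (metis Int_Diff_Un Int_Diff_disjoint card_Un_disjoint finite_Diff finite_Int)
  have cont: "isCont P x" for x unfolding hP by (intro continuous_intros)
  define T where "T = 1+(\<bar>m\<bar>+\<bar>n\<bar>+\<bar>p\<bar>+\<bar>q\<bar>)"
  have PT: "P T > 0" unfolding hP T_def using quint_pos[of m n p q] by simp
  have PmT: "P (-T) < 0"
  proof -
    have "T^5 + m*T^3 + (-n)*T^2 + p*T + (-q) > 0" unfolding T_def using quint_pos[of m "-n" p "-q"] by simp
    moreover have "P (-T) = -(T^5 + m*T^3 + (-n)*T^2 + p*T + (-q))" unfolding hP by (simp add: eval_nat_numeral)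
    ultimately show ?thesis by simp
  qed
  have Pu: "P (-u) > 0" if r: "P r = 0" "r < -u" and R1: "R = {r}" for r
  proof (rule ccontr)
    assume "\<not> P (-u) > 0"
    then have "P (-u) \<le> 0" by simp
    moreover have "-u \<le> T" using u0 unfolding T_def by simp
    ultimately obtain x where "-u \<le> x" "x \<le> T" "P x = 0"
      using IVT[of P "-u" 0 T] PT cont by force
    then have "x \<in> R" unfolding R_def by simp
    with R1 have "x = r" by simp
    with \<open>-u \<le> x\<close> r show False by simp
  qed
  have Pu2: "P u < 0" if r: "P r = 0" "r > u" and R1: "R = {r}" for r
  proof (rule ccontr)
    assume "\<not> P u < 0"
    then have "0 \<le> P u" by simp
    moreover have "-T \<le> u" using u0 unfolding T_def by simp
    ultimately obtain x where "-T \<le> x" "x \<le> u" "P x = 0"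
      using IVT[of P "-T" 0 u] PmT cont by force
    then have "x \<in> R" unfolding R_def by simp
    with R1 have "x = r" by simp
    with \<open>x \<le> u\<close> r show False by simp
  qed
  have part2: "(N_int = 1 \<and> N_ext = 0 \<and> r \<in> {-u..u})
          \<or> (N_int = 0 \<and> f pi > 0 \<and> r \<in> {..<-u})
          \<or> (N_int = 0 \<and> f 0 < 0 \<and> r \<in> {u<..})"
    if c1: "card R = 1" and r: "P r = 0" for r
  proof -
    obtain r0 where "R = {r0}" using c1 card_1_singletonE by blast
    moreover have "r \<in> R" using r unfolding R_def by simp
    ultimately have R1: "R = {r}" by simp
    consider "r \<in> {-u..u}" | "r < -u" | "r > u" by fastforce
    then show ?thesis
    proof cases
      case 1
      have e1: "R \<inter> {-u..u} = {r}" using R1 1 by auto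
      have e2: "R - {-u..u} = {}" using R1 1 by auto
      have "N_int = 1" unfolding Nint e1 by simp
      moreover have "N_ext = 0" unfolding Next e2 by simp
      ultimately show ?thesis using 1 by simp
    next
      case 2
      then have "R \<inter> {-u..u} = {}" using R1 by auto
      moreover have "f pi > 0" using Pu[OF r 2 R1] u0 fP[of pi] by simp
      ultimately show ?thesis using 2 Nint by simp
    next
      case 3
      then have "R \<inter> {-u..u} = {}" using R1 by auto
      moreover have "f 0 < 0" using Pu2[OF r 3 R1] u0 fP[of 0] by (simp add: divide_neg_pos)
      ultimately show ?thesis using 3 Nint by simp
    qed
  qed
  show ?thesis using sum part2 unfolding R_def by auto
qed
end
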